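(* The position operators $G_i=A_i+A_i^\dagger$, $i\geq1$, are monotone independent with respect to the vacuum state $\omega_\Omega(X)=\langle \Omega,X\Omega\rangle$ on the bounded operators on $\mathfrak F_{WM}(\mathcal H)$: if $\mathcal C_i$ denotes the non-unital $*$-algebra generated by $G_i$ (polynomials in $G_i$ without constant term), then (M1) for $i<j>k$ and $p_i\in\mathcal C_i,p_j\in\mathcal C_j,p_k\in\mathcal C_k$ one has $p_ip_jp_k=\omega_\Omega(p_j)p_ip_k$, and (M2) for $j_1>\cdots>j_k<\cdots<j_n$ and $p_{j_m}\in\mathcal C_{j_m}$ one has $\omega_\Omega(p_{j_1}\cdots p_{j_n})=\prod_{m=1}^n\omega_\Omega(p_{j_m})$.
   Context: Let $\mathcal H$ be a separable Hilbert space with a fixed orthonormal basis $\{e_i: i\geq 1\}$, and $\mathfrak F(\mathcal H)=\bigoplus_{n\ge 0}\mathcal H^{\otimes n}$ its full Fock space with vacuum vector $\Omega$. The weakly monotone Fock space $\mathfrak F_{WM}(\mathcal H)$ is the closed subspace of $\mathfrak F(\mathcal H)$ spanned by $\Omega$ and all simple tensors $e_{i_k}\otimes e_{i_{k-1}}\otimes\cdots\otimes e_{i_1}$ with $k\geq 1$ and $i_k\geq i_{k-1}\geq\cdots\geq i_1$. For $i\geq1$ the weakly monotone annihilation operator $A_i$ and creation operator $A_i^\dagger$ are the bounded operators on $\mathfrak F_{WM}(\mathcal H)$ defined on this spanning set by $A_i\Omega=0$, $A_i(e_{i_k}\otimes\cdots\otimes e_{i_1})=\delta_{i,i_k}\,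 e_{i_{k-1}}\otimes\cdots\otimes e_{i_1}$ (interpreted as $\delta_{i,i_1}\Omega$ when $k=1$), $A_i^\dagger\Omega=e_i$, and $A_i^\dagger(e_{i_k}\otimes\cdots\otimes e_{i_1})=e_i\otimes e_{i_k}\otimes\cdots\otimes e_{i_1}$ if $i\geq i_k$ and $=0$ if $i<i_k$. They are mutually adjoint, of norm one. The position operators are $G_i:=A_i+A_i^\dagger$ (self-adjoint). *)

theory Defs
  imports "HOL-Analysis.Analysis" "HOL-Computational_Algebra.Polynomial"
begin

(* Basis words: the list [i_k, ..., i_1] stands for e_{i_k} (x) ... (x) e_{i_1};
   [] stands for the vacuum Omega.  Vectors of F_WM(H) are coefficient functions
   on words (square summable, supported on weakly monotone words). *)
type_synonym vec = "nat list \<Rightarrow> complex"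

definition wm_word :: "nat list \<Rightarrow> bool" where
  "wm_word w \<longleftrightarrow> sorted_wrt (\<lambda>a b. a \<ge> b) w \<and> (\<forall>x\<in>set w. 1 \<le> x)"

definition in_Fock :: "vec \<Rightarrow> bool" where
  "in_Fock v \<longleftrightarrow> (\<forall>w. v w \<noteq> 0 \<longrightarrow> wm_word w) \<and> ((\<lambda>w. (cmod (v w))\<^sup>2) summable_on UNIV)"

definition vacuum :: vec where
  "vacuum = (\<lambda>w. if w = [] then 1 else 0)"

definition ann :: "nat \<Rightarrow> vec \<Rightarrow> vec" where
  "ann i v = (\<lambda>w. v (i # w))"

definition cre :: "nat \<Rightarrow> vec \<Rightarrow> vec" where
  "cre i v = (\<lambda>w. case w of [] \<Rightarrow> 0
      | j # w' \<Rightarrow> (if j = i \<and> (w' = [] \<or> hd w' \<le> i) then v w' else 0))"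

definition G :: "nat \<Rightarrow> vec \<Rightarrow> vec" where
  "G i v = (\<lambda>w. ann i v w + cre i v w)"

definition poly_op :: "complex poly \<Rightarrow> (vec \<Rightarrow> vec) \<Rightarrow> vec \<Rightarrow> vec" where
  "poly_op c T v = (\<lambda>w. \<Sum>n\<le>degree c. coeff c n * (T ^^ n) v w)"

definition omega :: "(vec \<Rightarrow> vec) \<Rightarrow> complex" where
  "omega X = X vacuum []"

definition prod_ops :: "(nat \<times> complex poly) list \<Rightarrow> vec \<Rightarrow> vec" where
  "prod_ops ps = foldr (\<lambda>(j, c) f. poly_op c (G j) \<circ> f) ps id"

end

theory Submission imports Defs begin

definition tens :: "nat \<Rightarrow> vec \<Rightarrow> vec \<Rightarrow> vec" where
  "tens j f u = (\<lambda>w. f (takeWhile (\<lambda>x. x = j) w) * u (dropWhile (\<lambda>x. x = j) w))"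

lemma hd_tw: "takeWhile (\<lambda>x. x = j) w \<noteq> [] \<Longrightarrow> hd (takeWhile (\<lambda>x. x = j) w) = j"
  by (induction w) auto

lemma G_tens:
  assumes hu: "\<And>w. w \<noteq> [] \<Longrightarrow> hd w > j \<Longrightarrow> u w = 0"
  shows "G j (tens j f u) = tens j (G j f) u"
proof (rule ext)
  fix w show "G j (tens j f u) w = tens j (G j f) u w"
  proof (cases w)
    case Nil then show ?thesis by (simp add: G_def ann_def cre_def tens_def)
  next
    case (Cons x w')
    show ?thesis
    proof (cases "x = j")
      case True
      show ?thesis
      proof (cases "w' = [] \<or> hd w' \<le> j")
        case True
        then show ?thesis using `x = j` Cons hd_tw[of j w']
          apply (auto simp add: G_def ann_def cre_def tens_def)
          apply (simp_all add: distrib_right)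
          done
      next
        case False
        then have "u w' = 0" using hu by auto
        moreover have "takeWhile (\<lambda>x. x = j) w' = []"
          using False by (cases w') auto
        moreover have "dropWhile (\<lambda>x. x = j) w' = w'"
          using False by (cases w') auto
        ultimately show ?thesis using `x = j` Cons False
          by (auto simp add: G_def ann_def cre_def tens_def)
      qed
    next
      case False
      then show ?thesis using Cons by (auto simp add: G_def ann_def cre_def tens_def)
    qed
  qed
qed

lemma pow_tens:
  assumes hu: "\<And>w. w \<noteq> [] \<Longrightarrow> hd w > j \<Longrightarrow> u w = 0"
  shows "(G j ^^ n) (tens j f u) = tens j ((G j ^^ n) f) u"
  by (induction n) (simp_all add: G_tens[OF hu])

lemma poly_tens:
  assumes hu: "\<And>w. w \<noteq> [] \<Longrightarrow> hd w > j \<Longrightarrow> u w = 0"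
  shows "poly_op c (G j) (tens j f u) = tens j (poly_op c (G j) f) u"
proof -
  have h: "\<And>n. (G j ^^ n) (tens j f u) = tens j ((G j ^^ n) f) u" by (rule pow_tens[OF hu])
  show ?thesis
    apply (simp only: poly_op_def h)
    apply (simp add: tens_def sum_distrib_right mult.assoc)
    done
qed

lemma tens_vac:
  assumes hu: "\<And>w. u w \<noteq> 0 \<Longrightarrow> w = [] \<or> hd w \<noteq> j"
  shows "tens j vacuum u = u"
proof (rule ext)
  fix w show "tens j vacuum u w = u w"
  proof (cases "takeWhile (\<lambda>x. x = j) w = []")
    case True
    then have "dropWhile (\<lambda>x. x = j) w = w"
      by (metis takeWhile_dropWhile_id append_Nil)
    then show ?thesis using True by (simp add: tens_def vacuum_def)
  next
    case False
    then have "w \<noteq> []" by auto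
    moreover have "hd w = j" using False by (cases w) (auto split: if_splits)
    ultimately have "u w = 0" using hu by auto
    then show ?thesis using False by (simp add: tens_def vacuum_def)
  qed
qed

lemma main:
  assumes hu: "\<And>w. u w \<noteq> 0 \<Longrightarrow> w = [] \<or> hd w < j"
  shows "poly_op c (G j) u = tens j (poly_op c (G j) vacuum) u"
proof -
  have "poly_op c (G j) u = poly_op c (G j) (tens j vacuum u)"
    using tens_vac[of u j] hu by fastforce
  also have "\<dots> = tens j (poly_op c (G j) vacuum) u"
    by (rule poly_tens) (use hu in force)
  finally show ?thesis .
qed

lemma main_nil:
  assumes hu: "\<And>w. u w \<noteq> 0 \<Longrightarrow> w = [] \<or> hd w < j"
  shows "poly_op c (G j) u [] = omega (poly_op c (G j)) * u []"
  using main[OF hu, where c=c] by (simp add: tens_def omega_def)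

definition low :: "nat \<Rightarrow> nat list \<Rightarrow> bool" where
  "low i w \<longleftrightarrow> w = [] \<or> hd w \<le> i"

lemma G_low:
  assumes "\<And>w. low i w \<Longrightarrow> x w = y w"
  shows "G i x = G i y"
  using assms by (auto simp: G_def ann_def cre_def low_def fun_eq_iff split: list.splits)

lemma poly_low:
  assumes "\<And>w. low i w \<Longrightarrow> x w = y w" and "coeff c 0 = 0"
  shows "poly_op c (G i) x = poly_op c (G i) y"
proof -
  have "\<And>n. n \<noteq> 0 \<Longrightarrow> (G i ^^ n) x = (G i ^^ n) y"
  proof -
    fix n :: nat assume "n \<noteq> 0"
    then obtain m where "n = Suc m" by (cases n) auto
    then show "(G i ^^ n) x = (G i ^^ n) y"
      by (simp only: funpow_Suc_right o_def G_low[OF assms(1)])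
  qed
  then show ?thesis unfolding poly_op_def
  proof (intro ext sum.cong refl)
    fix w n assume h: "\<And>n. n \<noteq> 0 \<Longrightarrow> (G i ^^ n) x = (G i ^^ n) y"
    show "coeff c n * (G i ^^ n) x w = coeff c n * (G i ^^ n) y w"
      by (cases "n = 0") (simp_all add: assms(2) h)
  qed
qed

lemma G_scal: "G i (\<lambda>w. a * u w) = (\<lambda>w. a * G i u w)"
  by (auto simp: G_def ann_def cre_def fun_eq_iff distrib_left split: list.splits)

lemma pow_scal: "(G i ^^ n) (\<lambda>w. a * u w) = (\<lambda>w. a * (G i ^^ n) u w)"
  by (induction n) (simp_all add: G_scal)

lemma poly_scal: "poly_op c (G i) (\<lambda>w. a * u w) = (\<lambda>w. a * poly_op c (G i) u w)"
  by (simp add: poly_op_def pow_scal sum_distrib_left mult.left_commute)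

lemma kill:
  assumes "i < j" "coeff c 0 = 0"
  shows "poly_op c (G i) (tens j f u) = (\<lambda>w. f [] * poly_op c (G i) u w)"
proof -
  have "poly_op c (G i) (tens j f u) = poly_op c (G i) (\<lambda>w. f [] * u w)"
  proof (rule poly_low[OF _ assms(2)])
    fix w assume "low i w"
    then have "takeWhile (\<lambda>x. x = j) w = []"
      using assms(1) by (cases w) (auto simp: low_def)
    moreover have "dropWhile (\<lambda>x. x = j) w = w"
      using \<open>low i w\<close> assms(1) by (cases w) (auto simp: low_def)
    ultimately show "tens j f u w = f [] * u w" by (simp add: tens_def)
  qed
  then show ?thesis by (simp add: poly_scal)
qed

definition Wsup :: "vec \<Rightarrow> bool" where
  "Wsup u \<longleftrightarrow> (\<forall>w. u w \<noteq> 0 \<longrightarrow> wm_word w)"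

definition Qsup :: "nat \<Rightarrow> vec \<Rightarrow> bool" where
  "Qsup k u \<longleftrightarrow> (\<forall>w. u w \<noteq> 0 \<longrightarrow> wm_word w \<and> (w = [] \<or> hd w \<le> k))"

lemma wm_cons:
  assumes "wm_word w'" "1 \<le> k" "w' = [] \<or> hd w' \<le> k"
  shows "wm_word (k # w')"
proof (cases w')
  case Nil then show ?thesis using assms by (simp add: wm_word_def)
next
  case (Cons a t)
  then have "\<forall>y\<in>set t. y \<le> a" "a \<le> k" using assms by (auto simp: wm_word_def)
  then have "\<forall>y\<in>set w'. y \<le> k" using Cons by auto
  then show ?thesis using assms(1,2) by (simp add: wm_word_def)
qed

lemma wm_tl:
  assumes "wm_word (k # w)"
  shows "wm_word w \<and> (w = [] \<or> hd w \<le> k)"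
  using assms by (cases w) (simp_all add: wm_word_def)

lemma G_Q:
  assumes "Wsup u" "1 \<le> k"
  shows "Qsup k (G k u)"
  unfolding Qsup_def
proof (intro allI impI)
  fix w assume h: "G k u w \<noteq> 0"
  show "wm_word w \<and> (w = [] \<or> hd w \<le> k)"
  proof (cases "u (k # w) \<noteq> 0")
    case True
    then have "wm_word (k # w)" using assms(1) by (simp add: Wsup_def)
    then show ?thesis by (rule wm_tl)
  next
    case False
    then have "cre k u w \<noteq> 0" using h by (simp add: G_def ann_def)
    then obtain w' where w: "w = k # w'" "w' = [] \<or> hd w' \<le> k" "u w' \<noteq> 0"
      by (auto simp: cre_def split: list.splits if_splits)
    then have "wm_word w'" using assms(1) by (simp add: Wsup_def)
    then have "wm_word w" using w assms(2) wm_cons by simp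
    then show ?thesis using w by simp
  qed
qed

lemma Q_W: "Qsup k u \<Longrightarrow> Wsup u"
  by (simp add: Qsup_def Wsup_def)

lemma pow_W: "Wsup u \<Longrightarrow> 1 \<le> k \<Longrightarrow> Wsup ((G k ^^ n) u)"
proof (induction n)
  case (Suc n)
  then have "Wsup ((G k ^^ n) u)" by simp
  then have "Qsup k (G k ((G k ^^ n) u))" using Suc.prems G_Q by blast
  then show ?case using Q_W by simp
qed simp

lemma poly_Q:
  assumes "Wsup u" "1 \<le> k" "coeff c 0 = 0"
  shows "Qsup k (poly_op c (G k) u)"
  unfolding Qsup_def
proof (intro allI impI)
  fix w assume "poly_op c (G k) u w \<noteq> 0"
  then have "(\<Sum>n\<le>degree c. coeff c n * (G k ^^ n) u w) \<noteq> 0" by (simp add: poly_op_def)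
  then obtain n where n: "coeff c n * (G k ^^ n) u w \<noteq> 0"
    by (rule sum.not_neutral_contains_not_neutral)
  have "n \<noteq> 0"
  proof
    assume "n = 0" then show False using n assms(3) by simp
  qed
  then obtain m where "n = Suc m" by (cases n) auto
  then have "Qsup k ((G k ^^ n) u)" using G_Q pow_W assms by simp
  then show "wm_word w \<and> (w = [] \<or> hd w \<le> k)" using n by (simp add: Qsup_def)
qed


lemma prod_ops_Nil[simp]: "prod_ops [] = id"
  by (simp add: prod_ops_def)

lemma prod_ops_Cons[simp]: "prod_ops ((j, c) # qs) = poly_op c (G j) \<circ> prod_ops qs"
  by (simp add: prod_ops_def)

lemma prod_ops_append: "prod_ops (xs @ ys) = prod_ops xs \<circ> prod_ops ys"
  by (induction xs) (auto simp: prod_ops_def)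

lemma vacuum_W: "Wsup vacuum"
  by (simp add: Wsup_def vacuum_def wm_word_def)

lemma prod_W:
  "Wsup u \<Longrightarrow> \<forall>(j, c)\<in>set qs. 1 \<le> j \<and> coeff c 0 = 0 \<Longrightarrow> Wsup (prod_ops qs u)"
proof (induction qs)
  case (Cons p qs)
  obtain j c where p: "p = (j, c)" by (cases p)
  have "Wsup (prod_ops qs u)" using Cons by simp
  then have "Qsup j (poly_op c (G j) (prod_ops qs u))" using Cons.prems p by (intro poly_Q) auto
  then show ?case using p Q_W by simp
qed simp

lemma prod_scal: "prod_ops qs (\<lambda>w. a * u w) = (\<lambda>w. a * prod_ops qs u w)"
proof (induction qs)
  case (Cons p qs)
  obtain j c where p: "p = (j, c)" by (cases p)
  show ?case using Cons by (simp add: p poly_scal)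
qed simp

definition om :: "nat \<times> complex poly \<Rightarrow> complex" where
  "om = (\<lambda>(j, c). omega (poly_op c (G j)))"

lemma decr:
  "successively (\<lambda>a b. fst b < fst a) qs \<Longrightarrow> \<forall>(j, c)\<in>set qs. 1 \<le> j \<and> coeff c 0 = 0 \<Longrightarrow>
   prod_ops qs vacuum [] = prod_list (map om qs)"
proof (induction qs)
  case Nil then show ?case by (simp add: vacuum_def)
next
  case (Cons p qs)
  obtain j c where p: "p = (j, c)" by (cases p)
  define y where "y = prod_ops qs vacuum"
  have IH: "y [] = prod_list (map om qs)"
    using Cons by (cases "qs = []") (auto simp: successively_Cons y_def)
  have P: "\<And>w. y w \<noteq> 0 \<Longrightarrow> w = [] \<or> hd w < j"
  proof (cases qs)
    case Nil
    then show "\<And>w. y w \<noteq> 0 \<Longrightarrow> w = [] \<or> hd w < j" by (simp add: y_def vacuum_def split: if_splits)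
  next
    case (Cons q qs')
    obtain j' c' where q: "q = (j', c')" by (cases q)
    have jj: "j' < j" using Cons.prems(1) p q \<open>qs = q # qs'\<close> by simp
    have "Wsup (prod_ops qs' vacuum)"
      using Cons.prems(2) \<open>qs = q # qs'\<close> by (intro prod_W vacuum_W) auto
    then have "Qsup j' y" unfolding y_def using \<open>qs = q # qs'\<close> q Cons.prems(2) p
      by (simp, intro poly_Q) auto
    then show "\<And>w. y w \<noteq> 0 \<Longrightarrow> w = [] \<or> hd w < j" using jj
      by (fastforce simp: Qsup_def)
  qed
  have "prod_ops (p # qs) vacuum [] = poly_op c (G j) y []" by (simp add: p y_def)
  also have "\<dots> = omega (poly_op c (G j)) * y []" by (rule main_nil[OF P])
  finally show ?case using IH by (simp add: p om_def)
qed

lemma incr: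
  "successively (\<lambda>a b. fst a < fst b) ((j0, c0) # post) \<Longrightarrow>
   \<forall>(j, c)\<in>set post. 1 \<le> j \<and> coeff c 0 = 0 \<Longrightarrow> coeff c0 0 = 0 \<Longrightarrow>
   poly_op c0 (G j0) (prod_ops post vacuum) = (\<lambda>w. prod_list (map om post) * poly_op c0 (G j0) vacuum w)"
proof (induction post arbitrary: j0 c0)
  case Nil then show ?case by simp
next
  case (Cons p post)
  obtain j1 c1 where p: "p = (j1, c1)" by (cases p)
  have lt: "j0 < j1" using Cons.prems(1) p by simp
  have c1: "coeff c1 0 = 0" using Cons.prems(2) p by auto
  have IH: "poly_op c1 (G j1) (prod_ops post vacuum) = (\<lambda>w. prod_list (map om post) * poly_op c1 (G j1) vacuum w)"
    using Cons.prems p c1 by (intro Cons.IH) (auto simp: successively_Cons)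
  have T: "poly_op c1 (G j1) vacuum = tens j1 (poly_op c1 (G j1) vacuum) vacuum"
    by (rule main) (simp add: vacuum_def split: if_splits)
  have "poly_op c0 (G j0) (prod_ops (p # post) vacuum)
      = poly_op c0 (G j0) (\<lambda>w. prod_list (map om post) * poly_op c1 (G j1) vacuum w)"
    using IH by (simp add: p)
  also have "\<dots> = (\<lambda>w. prod_list (map om post) * poly_op c0 (G j0) (poly_op c1 (G j1) vacuum) w)"
    by (rule poly_scal)
  also have "\<dots> = (\<lambda>w. prod_list (map om post) * (omega (poly_op c1 (G j1)) * poly_op c0 (G j0) vacuum w))"
    by (subst T) (simp add: kill[OF lt Cons.prems(3)] omega_def)
  finally show ?case by (simp add: p om_def mult.assoc mult.left_commute)
qed

theorem corollary2p3:
  shows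
  "(\<forall>i j k ci cj ck v.
      1 \<le> i \<and> 1 \<le> j \<and> 1 \<le> k \<and> i < j \<and> k < j \<and>
      coeff ci 0 = 0 \<and> coeff cj 0 = 0 \<and> coeff ck 0 = 0 \<and> in_Fock v \<longrightarrow>
      poly_op ci (G i) (poly_op cj (G j) (poly_op ck (G k) v)) =
      (\<lambda>w. omega (poly_op cj (G j)) * poly_op ci (G i) (poly_op ck (G k) v) w))
   \<and>
   (\<forall>js cs.
      js \<noteq> [] \<and> length cs = length js \<and> (\<forall>j\<in>set js. 1 \<le> j) \<and>
      (\<forall>c\<in>set cs. coeff c 0 = 0) \<and>
      (\<exists>m < length js. (\<forall>a<m. js ! (a + 1) < js ! a) \<and>
                        (\<forall>a. m \<le> a \<and> a + 1 < length js \<longrightarrow> js ! a < js ! (a + 1))) \<longrightarrow>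
      omega (prod_ops (zip js cs)) =
      prod_list (map (\<lambda>(j, c). omega (poly_op c (G j))) (zip js cs)))"
proof (intro conjI allI impI)
  fix i j k :: nat and ci cj ck :: "complex poly" and v :: vec
  assume H: "1 \<le> i \<and> 1 \<le> j \<and> 1 \<le> k \<and> i < j \<and> k < j \<and>
      coeff ci 0 = 0 \<and> coeff cj 0 = 0 \<and> coeff ck 0 = 0 \<and> in_Fock v"
  have W: "Wsup v" using H by (simp add: in_Fock_def Wsup_def)
  define u where "u = poly_op ck (G k) v"
  have "Qsup k u" unfolding u_def using W H by (intro poly_Q) auto
  then have P: "\<And>w. u w \<noteq> 0 \<Longrightarrow> w = [] \<or> hd w < j" using H by (fastforce simp: Qsup_def)
  have M: "poly_op cj (G j) u = tens j (poly_op cj (G j) vacuum) u" by (rule main[OF P])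
  have ij: "i < j" "coeff ci 0 = 0" using H by auto
  show "poly_op ci (G i) (poly_op cj (G j) (poly_op ck (G k) v)) =
      (\<lambda>w. omega (poly_op cj (G j)) * poly_op ci (G i) (poly_op ck (G k) v) w)"
    unfolding u_def[symmetric] M kill[OF ij] by (simp add: omega_def)
next
  fix js :: "nat list" and cs :: "complex poly list"
  assume H: "js \<noteq> [] \<and> length cs = length js \<and> (\<forall>j\<in>set js. 1 \<le> j) \<and>
      (\<forall>c\<in>set cs. coeff c 0 = 0) \<and>
      (\<exists>m < length js. (\<forall>a<m. js ! (a + 1) < js ! a) \<and>
                        (\<forall>a. m \<le> a \<and> a + 1 < length js \<longrightarrow> js ! a < js ! (a + 1)))"
  then obtain m where m: "m < length js" "\<forall>a<m. js ! (a + 1) < js ! a"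
      "\<forall>a. m \<le> a \<and> a + 1 < length js \<longrightarrow> js ! a < js ! (a + 1)" by blast
  define zs where "zs = zip js cs"
  have len: "length zs = length js" using H by (simp add: zs_def)
  have fstz: "\<And>a. a < length js \<Longrightarrow> fst (zs ! a) = js ! a" using H by (simp add: zs_def)
  have setz: "\<forall>(j, c)\<in>set zs. 1 \<le> j \<and> coeff c 0 = 0"
    using H by (auto simp: zs_def dest: set_zip_leftD set_zip_rightD)
  define x where "x = zs ! m"
  define pre where "pre = take m zs"
  define post where "post = drop (Suc m) zs"
  have zsplit: "zs = pre @ x # post" unfolding pre_def x_def post_def
    using m(1) len by (simp add: id_take_nth_drop)
  have tk: "take (Suc m) zs = pre @ [x]" unfolding pre_def x_def
    using m(1) len by (simp add: take_Suc_conv_app_nth)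
  have dr: "drop m zs = x # post" unfolding post_def x_def
    using m(1) len by (simp add: Cons_nth_drop_Suc)
  have dec: "successively (\<lambda>a b. fst b < fst a) (pre @ [x])"
    unfolding tk[symmetric] successively_conv_nth
  proof (intro allI impI)
    fix a assume "Suc a < length (take (Suc m) zs)"
    then have a: "a < m" "Suc a < length js" using len by auto
    then show "fst (take (Suc m) zs ! Suc a) < fst (take (Suc m) zs ! a)"
      using m(2) fstz by simp
  qed
  have inc: "successively (\<lambda>a b. fst a < fst b) (x # post)"
    unfolding dr[symmetric] successively_conv_nth
  proof (intro allI impI)
    fix a assume "Suc a < length (drop m zs)"
    then have a: "m + a + 1 < length js" using len by auto
    then show "fst (drop m zs ! a) < fst (drop m zs ! Suc a)"
      using m(3) fstz[of "m + a"] fstz[of "m + Suc a"] len by simp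
  qed
  obtain jx cx where xp: "x = (jx, cx)" by (cases x)
  have setpre: "\<forall>(j, c)\<in>set (pre @ [x]). 1 \<le> j \<and> coeff c 0 = 0"
    using setz zsplit by auto
  have setpost: "\<forall>(j, c)\<in>set post. 1 \<le> j \<and> coeff c 0 = 0"
    using setz zsplit by auto
  have cx: "coeff cx 0 = 0" using setz zsplit xp by auto
  have I: "poly_op cx (G jx) (prod_ops post vacuum) = (\<lambda>w. prod_list (map om post) * poly_op cx (G jx) vacuum w)"
    using incr[of jx cx post] inc xp setpost cx by simp
  have "omega (prod_ops zs) = prod_ops pre (poly_op cx (G jx) (prod_ops post vacuum)) []"
    by (simp add: omega_def zsplit xp prod_ops_append)
  also have "\<dots> = prod_list (map om post) * prod_ops (pre @ [x]) vacuum []"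
    by (simp add: I prod_scal prod_ops_append xp)
  also have "\<dots> = prod_list (map om post) * prod_list (map om (pre @ [x]))"
    using decr[OF dec setpre] by simp
  also have "\<dots> = prod_list (map om zs)"
    by (simp add: zsplit mult.commute mult.left_commute)
  finally show "omega (prod_ops (zip js cs)) =
      prod_list (map (\<lambda>(j, c). omega (poly_op c (G j))) (zip js cs))"
    by (simp add: zs_def om_def)
qed

end
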